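(* For every integer $L\ge 5$, the class of Subgraph MPNNs cannot count $L$-cycles at node level, and for every integer $L\ge 4$, the class of Subgraph MPNNs cannot count $L$-paths at node level. That is, for each such $L$ there exist node-graph pairs $(i_1,G_1),(i_2,G_2)$ with $C(L\text{-cycle},i_1,G_1)\ne C(L\text{-cycle},i_2,G_2)$ (resp. $C(L\text{-path},i_1,G_1)\ne C(L\text{-path},i_2,G_2)$) such that every Subgraph MPNN gives $h_{i_1}(G_1)=h_{i_2}(G_2)$.
   Context: Graphs are finite, simple, undirected, $G=(V,E)$, possibly carrying node attributes $x_v$ and edge attributes $e_{u,v}$ (a fixed constant when absent). $N(v)$ is the neighbour set of $v$. For $L\ge 1$, an $L$-path is a sequence of edges $(v_1,v_2),\dots,(v_L,v_{L+1})$ of $G$ with $v_1,\dots,v_{L+1}$ pairwise distinct; for $L\ge 3$, an $L$-cycle is such a sequence with $v_1,\dots,v_L$ pairwise distinct and $v_{L+1}=v_1$. Two paths (resp. cycles) are identified when their edge sets coincide. $C(L\text{-cycle},i,G)$ is the number of inequivalent $L$-cycles containing node $i$; $C(L\text{-path},i,G)$ is the number of inequivalent $L$-paths starting from $i$. A class $\mathcal F$ of functions on node-graph pairs can count $S$ at node level if for all $(i_1,G_1),(i_2,G_2)$ with $C(S,i_1,G_1)\ne C(S,i_2,G_2)$ there is $f\in\mathcal F$ with $f(i_1,G_1)\ne f(i_2,G_2)$. Subgraph MPNNs. A Subgraph MPNN is specified by: (1) a subgraph extraction rule, either node deletion, $(V_i,E_i)=(V\setminus\{i\},E\setminus\{(i,j):j\in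 N(i)\})$, or the $K$-hop ego-network for some integer $K\ge1$, i.e. $(V_i,E_i)$ is the subgraph of $G$ induced by the nodes at shortest-path distance at most $K$ from $i$; (2) a node labeling $z_{i,j}$, which is either absent, identity labeling $z_{i,j}=\mathbb 1_{i=j}$, or shortest path distance $z_{i,j}=\mathrm{spd}(i,j)$; (3) a number of layers $T$ and arbitrary functions $M_t$ (with values in some $\mathbb R^{d_t}$) and $U_t$; (4) an arbitrary readout $R_{\text{node}}$ on finite multisets. For each root $i\in V$ and $j\in V_i$: $h^{(0)}_{i,j}=x_j\oplus z_{i,j}$, $h^{(t+1)}_{i,j}=U_t\big(h^{(t)}_{i,j},\sum_{k\in N_i(j)}M_t(h^{(t)}_{i,j},h^{(t)}_{i,k},e_{j,k})\big)$ with $N_i(j)=\{k\in V_i:(j,k)\in E_i\}$, and $h_i=R_{\text{node}}(\{\!\{h^{(T)}_{i,j}:j\in V_i\}\!\})$. The node-level function computed is $(i,G)\mapsto h_i$; the class of Subgraph MPNNs consists of all such choices. *)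

theory Defs
  imports Main "HOL-Library.Multiset" "HOL-Library.Extended_Nat"
begin

record 'v graph =
  verts :: "'v set"
  edges :: "'v set set"
  nattr :: "'v \<Rightarrow> real list"
  eattr :: "'v \<Rightarrow> 'v \<Rightarrow> real list"

definition wf_graph :: "'v graph \<Rightarrow> bool" where
  "wf_graph G \<longleftrightarrow>
     finite (verts G) \<and>
     (\<forall>e\<in>edges G. \<exists>u v. u \<noteq> v \<and> u \<in> verts G \<and> v \<in> verts G \<and> e = {u, v}) \<and>
     (\<exists>d. \<forall>v\<in>verts G. length (nattr G v) = d) \<and>
     (\<exists>d. \<forall>u v. {u, v} \<in> edges G \<longrightarrow> length (eattr G u v) = d) \<and>
     (\<forall>u v. {u, v} \<in> edges G \<longrightarrow> eattr G u v = eattr G v u)"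

definition nbrs :: "'v graph \<Rightarrow> 'v \<Rightarrow> 'v set" where
  "nbrs G v = {u \<in> verts G. {v, u} \<in> edges G}"

text \<open>Walks (as vertex lists) and shortest-path distance (\<infinity> if unreachable).\<close>
definition walk :: "'v graph \<Rightarrow> 'v list \<Rightarrow> bool" where
  "walk G xs \<longleftrightarrow> xs \<noteq> [] \<and> set xs \<subseteq> verts G \<and>
     (\<forall>k. Suc k < length xs \<longrightarrow> {xs ! k, xs ! Suc k} \<in> edges G)"

definition spd :: "'v graph \<Rightarrow> 'v \<Rightarrow> 'v \<Rightarrow> enat" where
  "spd G i j = (INF xs \<in> {xs. walk G xs \<and> hd xs = i \<and> last xs = j}. enat (length xs - 1))"

definition seq_edges :: "nat \<Rightarrow> 'v list \<Rightarrow> 'v set set" where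
  "seq_edges L vs = {{vs ! k, vs ! Suc k} | k. k < L}"

definition is_path :: "'v graph \<Rightarrow> nat \<Rightarrow> 'v list \<Rightarrow> bool" where
  "is_path G L vs \<longleftrightarrow> length vs = Suc L \<and> distinct vs \<and>
     (\<forall>k<L. {vs ! k, vs ! Suc k} \<in> edges G)"

definition is_cycle :: "'v graph \<Rightarrow> nat \<Rightarrow> 'v list \<Rightarrow> bool" where
  "is_cycle G L vs \<longleftrightarrow> length vs = Suc L \<and> distinct (take L vs) \<and> vs ! L = vs ! 0 \<and>
     (\<forall>k<L. {vs ! k, vs ! Suc k} \<in> edges G)"

text \<open>Counts of inequivalent (edge-set-identified) cycles containing i / paths starting at i.\<close>
definition cycle_count :: "nat \<Rightarrow> 'v \<Rightarrow> 'v graph \<Rightarrow> nat" where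
  "cycle_count L i G = card {seq_edges L vs | vs. is_cycle G L vs \<and> i \<in> set vs}"

definition path_count :: "nat \<Rightarrow> 'v \<Rightarrow> 'v graph \<Rightarrow> nat" where
  "path_count L i G = card {seq_edges L vs | vs. is_path G L vs \<and> hd vs = i}"

datatype extraction = NodeDeletion | EgoNet nat
datatype labeling = NoLabel | IdLabel | SpdLabel

text \<open>M t: message function of layer t, with values in R^(d t) (encoded as functions
  nat => real vanishing from index d t on); U t: update; R: readout on finite multisets.\<close>
record mpnn =
  ext :: extraction
  lab :: labeling
  layers :: nat
  dim :: "nat \<Rightarrow> nat"
  msg :: "nat \<Rightarrow> real list \<Rightarrow> real list \<Rightarrow> real list \<Rightarrow> (nat \<Rightarrow> real)"
  upd :: "nat \<Rightarrow> real list \<Rightarrow> (nat \<Rightarrow> real) \<Rightarrow> real list"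
  readout :: "real list multiset \<Rightarrow> real list"

definition wf_mpnn :: "mpnn \<Rightarrow> bool" where
  "wf_mpnn P \<longleftrightarrow> (\<forall>K. ext P = EgoNet K \<longrightarrow> K \<ge> 1) \<and>
     (\<forall>t a b c n. dim P t \<le> n \<longrightarrow> msg P t a b c n = 0)"

definition sub_verts :: "extraction \<Rightarrow> 'v graph \<Rightarrow> 'v \<Rightarrow> 'v set" where
  "sub_verts x G i = (case x of
      NodeDeletion \<Rightarrow> verts G - {i}
    | EgoNet K \<Rightarrow> {j \<in> verts G. spd G i j \<le> enat K})"

text \<open>Neighbours of j inside the extracted subgraph of root i (both extraction rules give
  the subgraph induced by the extracted vertex set).\<close>
definition sub_nbrs :: "extraction \<Rightarrow> 'v graph \<Rightarrow> 'v \<Rightarrow> 'v \<Rightarrow> 'v set" where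
  "sub_nbrs x G i j = {k \<in> sub_verts x G i. {j, k} \<in> edges G}"

definition node_label :: "labeling \<Rightarrow> 'v graph \<Rightarrow> 'v \<Rightarrow> 'v \<Rightarrow> real list" where
  "node_label l G i j = (case l of
      NoLabel \<Rightarrow> []
    | IdLabel \<Rightarrow> [if i = j then 1 else 0]
    | SpdLabel \<Rightarrow> [case spd G i j of enat n \<Rightarrow> real n | \<infinity> \<Rightarrow> -1])"

fun hstate :: "mpnn \<Rightarrow> 'v graph \<Rightarrow> 'v \<Rightarrow> nat \<Rightarrow> 'v \<Rightarrow> real list" where
  "hstate P G i 0 j = nattr G j @ node_label (lab P) G i j"
| "hstate P G i (Suc t) j =
     upd P t (hstate P G i t j)
       (\<lambda>n. \<Sum>k\<in>sub_nbrs (ext P) G i j.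
              msg P t (hstate P G i t j) (hstate P G i t k) (eattr G j k) n)"

definition mpnn_out :: "mpnn \<Rightarrow> 'v graph \<Rightarrow> 'v \<Rightarrow> real list" where
  "mpnn_out P G i = readout P (image_mset (hstate P G i (layers P)) (mset_set (sub_verts (ext P) G i)))"

definition subgraph_mpnns :: "(nat \<times> nat graph \<Rightarrow> real list) set" where
  "subgraph_mpnns = {(\<lambda>(i, G). mpnn_out P G i) | P. wf_mpnn P}"

text \<open>Node-level counting power of a class of functions on node-graph pairs
  (vertices drawn from nat; every finite graph is isomorphic to such a graph).\<close>
definition can_count_node ::
    "(nat \<times> nat graph \<Rightarrow> 'o) set \<Rightarrow> (nat \<Rightarrow> nat graph \<Rightarrow> nat) \<Rightarrow> bool" where
  "can_count_node F C \<longleftrightarrow>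
     (\<forall>i1 G1 i2 G2. wf_graph G1 \<and> i1 \<in> verts G1 \<and> wf_graph G2 \<and> i2 \<in> verts G2 \<and>
        C i1 G1 \<noteq> C i2 G2 \<longrightarrow> (\<exists>f\<in>F. f (i1, G1) \<noteq> f (i2, G2)))"

end

theory Submission
  imports Defs
begin

definition adjG :: "(nat \<Rightarrow> nat \<Rightarrow> bool) \<Rightarrow> nat \<Rightarrow> nat \<Rightarrow> nat \<Rightarrow> bool" where
  "adjG H n x y \<longleftrightarrow> (x = n \<and> y < n) \<or> (y = n \<and> x < n) \<or> H x y"

definition mkG :: "(nat \<Rightarrow> nat \<Rightarrow> bool) \<Rightarrow> nat \<Rightarrow> nat graph" where
  "mkG H n = \<lparr>verts = {0..n}, edges = {{x, y} | x y. adjG H n x y},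
     nattr = (\<lambda>_. []), eattr = (\<lambda>_ _. [])\<rparr>"

definition goodH :: "(nat \<Rightarrow> nat \<Rightarrow> bool) \<Rightarrow> nat \<Rightarrow> bool" where
  "goodH H n \<longleftrightarrow> 0 < n \<and> (\<forall>x y. H x y \<longrightarrow> H y x \<and> x \<noteq> y \<and> x < n \<and> y < n) \<and>
     (\<forall>j<n. card {k. H j k} = 2)"

lemma mkG_simps[simp]: "verts (mkG H n) = {0..n}" "nattr (mkG H n) = (\<lambda>_. [])"
  "eattr (mkG H n) = (\<lambda>_ _. [])"
  by (simp_all add: mkG_def)

lemma edge_iff:
  assumes "goodH H n"
  shows "{a, b} \<in> edges (mkG H n) \<longleftrightarrow> adjG H n a b"
proof
  assume "{a, b} \<in> edges (mkG H n)"
  then obtain x y where "{a,b} = {x,y}" "adjG H n x y" by (auto simp: mkG_def)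
  then show "adjG H n a b" using assms unfolding goodH_def adjG_def
    by (auto simp: doubleton_eq_iff)
next
  assume "adjG H n a b" then show "{a, b} \<in> edges (mkG H n)" by (auto simp: mkG_def)
qed

lemma adjG_le: "goodH H n \<Longrightarrow> adjG H n a b \<Longrightarrow> a \<le> n \<and> b \<le> n \<and> a \<noteq> b"
  unfolding goodH_def adjG_def by force

lemma edges_finite: "goodH H n \<Longrightarrow> finite (edges (mkG H n))"
proof -
  assume g: "goodH H n"
  have "edges (mkG H n) \<subseteq> Pow {0..n}"
  proof
    fix e assume "e \<in> edges (mkG H n)"
    then obtain x y where "e = {x,y}" "adjG H n x y" by (auto simp: mkG_def)
    then show "e \<in> Pow {0..n}" using adjG_le[OF g] by auto
  qed
  then show ?thesis by (rule finite_subset) simp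
qed

lemma wf_mkG: "goodH H n \<Longrightarrow> wf_graph (mkG H n)"
  unfolding wf_graph_def
proof (intro conjI)
  assume g: "goodH H n"
  show "\<forall>e\<in>edges (mkG H n). \<exists>u v. u \<noteq> v \<and> u \<in> verts (mkG H n) \<and> v \<in> verts (mkG H n) \<and> e = {u, v}"
  proof
    fix e assume "e \<in> edges (mkG H n)"
    then obtain x y where "e = {x,y}" "adjG H n x y" by (auto simp: mkG_def)
    then show "\<exists>u v. u \<noteq> v \<and> u \<in> verts (mkG H n) \<and> v \<in> verts (mkG H n) \<and> e = {u, v}"
      using adjG_le[OF g] by auto
  qed
qed auto

lemma walk_len: "walk G xs \<Longrightarrow> hd xs \<noteq> last xs \<Longrightarrow> length xs \<ge> 2"
  unfolding walk_def by (cases xs; cases "tl xs"; auto)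

lemma spd_self: "i \<in> verts G \<Longrightarrow> spd G i i = 0"
proof -
  assume "i \<in> verts G"
  then have "[i] \<in> {xs. walk G xs \<and> hd xs = i \<and> last xs = i}" by (simp add: walk_def)
  then have "spd G i i \<le> enat (length [i] - 1)" unfolding spd_def by (rule INF_lower)
  then show ?thesis by (simp add: zero_enat_def[symmetric])
qed

lemma spd_one: "i \<noteq> j \<Longrightarrow> i \<in> verts G \<Longrightarrow> j \<in> verts G \<Longrightarrow> {i, j} \<in> edges G \<Longrightarrow> spd G i j = 1"
proof -
  assume a: "i \<noteq> j" "i \<in> verts G" "j \<in> verts G" "{i, j} \<in> edges G"
  then have "[i,j] \<in> {xs. walk G xs \<and> hd xs = i \<and> last xs = j}"
    by (auto simp: walk_def less_Suc_eq)
  then have "spd G i j \<le> enat (length [i,j] - 1)" unfolding spd_def by (rule INF_lower)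
  moreover have "1 \<le> spd G i j" unfolding spd_def
  proof (rule INF_greatest)
    fix xs assume "xs \<in> {xs. walk G xs \<and> hd xs = i \<and> last xs = j}"
    then have "length xs \<ge> 2" using walk_len a(1) by force
    then show "1 \<le> enat (length xs - 1)" by (simp add: one_enat_def)
  qed
  ultimately show ?thesis by (simp add: one_enat_def)
qed

lemma spd_mkG:
  assumes g: "goodH H n" and j: "j \<le> n"
  shows "spd (mkG H n) n j = (if j = n then 0 else 1)"
proof (cases "j = n")
  case True then show ?thesis by (simp add: spd_self)
next
  case False
  then have "{n, j} \<in> edges (mkG H n)" using edge_iff[OF g] j by (simp add: adjG_def)
  then show ?thesis using False j by (simp add: spd_one)
qed

lemma sub_verts_mkG:
  assumes g: "goodH H n" and w: "wf_mpnn P"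
  shows "sub_verts (ext P) (mkG H n) n = (case ext P of NodeDeletion \<Rightarrow> {0..<n} | EgoNet K \<Rightarrow> {0..n})"
proof (cases "ext P")
  case NodeDeletion then show ?thesis by (auto simp: sub_verts_def)
next
  case (EgoNet K)
  then have K: "K \<ge> 1" using w by (simp add: wf_mpnn_def)
  have "spd (mkG H n) n j \<le> enat K" if "j \<le> n" for j
    using spd_mkG[OF g that] K by (simp add: one_enat_def)
  then show ?thesis using EgoNet by (auto simp: sub_verts_def)
qed

lemma sub_verts_minus: "goodH H n \<Longrightarrow> wf_mpnn P \<Longrightarrow> sub_verts (ext P) (mkG H n) n - {n} = {0..<n}"
  by (auto simp: sub_verts_mkG split: extraction.splits)

lemma sub_nbrs_fin: "goodH H n \<Longrightarrow> wf_mpnn P \<Longrightarrow> finite (sub_nbrs (ext P) (mkG H n) n j)"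
  unfolding sub_nbrs_def by (auto simp: sub_verts_mkG split: extraction.splits)

lemma sub_nbrs_root:
  assumes g: "goodH H n" and w: "wf_mpnn P"
  shows "n \<in> sub_nbrs (ext P) (mkG H n) n j \<longleftrightarrow> j \<noteq> n \<and> j < n \<and> (\<exists>K. ext P = EgoNet K)"
  using adjG_le[OF g, of j n] 
  by (auto simp: sub_nbrs_def sub_verts_mkG[OF g w] edge_iff[OF g] adjG_def split: extraction.splits)

lemma sub_nbrs_card:
  assumes g: "goodH H n" and w: "wf_mpnn P" and j: "j \<le> n"
  shows "card (sub_nbrs (ext P) (mkG H n) n j - {n}) = (if j = n then n else 2)"
proof -
  have e: "sub_nbrs (ext P) (mkG H n) n j - {n} = {k. k < n \<and> adjG H n j k}"
  proof -
    have "sub_nbrs (ext P) (mkG H n) n j - {n} =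
        {k \<in> sub_verts (ext P) (mkG H n) n - {n}. {j,k} \<in> edges (mkG H n)}"
      unfolding sub_nbrs_def by blast
    also have "\<dots> = {k \<in> {0..<n}. adjG H n j k}"
      by (simp only: sub_verts_minus[OF g w] edge_iff[OF g])
    finally show ?thesis by auto
  qed
  show ?thesis
  proof (cases "j = n")
    case True
    then have "{k. k < n \<and> adjG H n j k} = {0..<n}" by (auto simp: adjG_def)
    then show ?thesis using e True by simp
  next
    case False
    then have "{k. k < n \<and> adjG H n j k} = {k. H j k}" using g j
      by (auto simp: adjG_def goodH_def)
    then show ?thesis using e False g j by (simp add: goodH_def)
  qed
qed

lemma sum_split:
  fixes g :: "nat \<Rightarrow> real"
  assumes "finite S" "\<forall>x\<in>S. g x = (if x = r then a else b)"
  shows "sum g S = (if r \<in> S then a else 0) + of_nat (card (S - {r})) * b"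
proof -
  have c: "sum g (S - {r}) = of_nat (card (S - {r})) * b"
    using assms(2) by (simp add: sum.cong[of "S - {r}" "S - {r}" g "\<lambda>_. b"])
  show ?thesis
  proof (cases "r \<in> S")
    case True
    then have "sum g S = g r + sum g (S - {r})" using assms(1) by (simp add: sum.remove)
    then show ?thesis using c True assms(2) by simp
  next
    case False then show ?thesis using c by simp
  qed
qed

lemma inv:
  assumes "goodH H n" "goodH H' n" "wf_mpnn P" "j \<le> n" "k \<le> n" "j = n \<longleftrightarrow> k = n"
  shows "hstate P (mkG H n) n t j = hstate P (mkG H' n) n t k"
  using assms
proof (induction t arbitrary: H H' j k)
  case 0
  then show ?case
    by (auto simp: node_label_def spd_mkG split: labeling.splits)
next
  case (Suc t)
  note g1 = Suc.prems(1) and g2 = Suc.prems(2) and w = Suc.prems(3)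
  have n0: "0 < n" using g1 by (simp add: goodH_def)
  define h1 where "h1 = hstate P (mkG H n) n t"
  define h2 where "h2 = hstate P (mkG H' n) n t"
  have hjk: "h1 j = h2 k" unfolding h1_def h2_def using Suc.IH[OF g1 g2 w, of j k] Suc.prems by blast
  have h1x: "h1 x = (if x = n then h1 n else h1 0)" if "x \<le> n" for x
    unfolding h1_def using Suc.IH[OF g1 g1 w, of x n] Suc.IH[OF g1 g1 w, of x 0] that n0 by auto
  have h2x: "h2 x = (if x = n then h1 n else h1 0)" if "x \<le> n" for x
    unfolding h1_def h2_def using Suc.IH[OF g1 g2 w, of n x] Suc.IH[OF g1 g2 w, of 0 x] that n0 by auto
  define S1 where "S1 = sub_nbrs (ext P) (mkG H n) n j"
  define S2 where "S2 = sub_nbrs (ext P) (mkG H' n) n k"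
  have S1le: "\<forall>x\<in>S1. x \<le> n" unfolding S1_def sub_nbrs_def using sub_verts_mkG[OF g1 w]
    by (auto split: extraction.splits)
  have S2le: "\<forall>x\<in>S2. x \<le> n" unfolding S2_def sub_nbrs_def using sub_verts_mkG[OF g2 w]
    by (auto split: extraction.splits)
  have r1: "n \<in> S1 \<longleftrightarrow> j \<noteq> n \<and> j < n \<and> (\<exists>K. ext P = EgoNet K)"
    unfolding S1_def by (rule sub_nbrs_root[OF g1 w])
  have r2: "n \<in> S2 \<longleftrightarrow> k \<noteq> n \<and> k < n \<and> (\<exists>K. ext P = EgoNet K)"
    unfolding S2_def by (rule sub_nbrs_root[OF g2 w])
  have rt: "n \<in> S1 \<longleftrightarrow> n \<in> S2" unfolding r1 r2 using Suc.prems(4-6) by auto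
  have c1: "card (S1 - {n}) = (if j = n then n else 2)" unfolding S1_def
    by (rule sub_nbrs_card[OF g1 w Suc.prems(4)])
  have c2: "card (S2 - {n}) = (if k = n then n else 2)" unfolding S2_def
    by (rule sub_nbrs_card[OF g2 w Suc.prems(5)])
  have cd: "card (S1 - {n}) = card (S2 - {n})" unfolding c1 c2 using Suc.prems(6) by simp
  have sums: "(\<Sum>x\<in>S1. msg P t (h1 j) (h1 x) [] i) = (\<Sum>x\<in>S2. msg P t (h2 k) (h2 x) [] i)" for i
  proof -
    have "(\<Sum>x\<in>S1. msg P t (h1 j) (h1 x) [] i) = (if n \<in> S1 then msg P t (h1 j) (h1 n) [] i else 0)
       + of_nat (card (S1 - {n})) * msg P t (h1 j) (h1 0) [] i"
    proof (rule sum_split)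
      show "finite S1" unfolding S1_def by (rule sub_nbrs_fin[OF g1 w])
      show "\<forall>x\<in>S1. msg P t (h1 j) (h1 x) [] i = (if x = n then msg P t (h1 j) (h1 n) [] i else msg P t (h1 j) (h1 0) [] i)"
      proof
        fix x assume "x \<in> S1"
        then have hx: "h1 x = (if x = n then h1 n else h1 0)" using S1le h1x by blast
        show "msg P t (h1 j) (h1 x) [] i = (if x = n then msg P t (h1 j) (h1 n) [] i else msg P t (h1 j) (h1 0) [] i)"
        proof (cases "x = n")
          case True then show ?thesis by simp
        next
          case False then have "h1 x = h1 0" using hx by simp
          then show ?thesis using False by simp
        qed
      qed
    qed
    moreover have "(\<Sum>x\<in>S2. msg P t (h2 k) (h2 x) [] i) = (if n \<in> S2 then msg P t (h1 j) (h1 n) [] i else 0)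
       + of_nat (card (S2 - {n})) * msg P t (h1 j) (h1 0) [] i"
    proof (rule sum_split)
      show "finite S2" unfolding S2_def by (rule sub_nbrs_fin[OF g2 w])
      show "\<forall>x\<in>S2. msg P t (h2 k) (h2 x) [] i = (if x = n then msg P t (h1 j) (h1 n) [] i else msg P t (h1 j) (h1 0) [] i)"
      proof
        fix x assume "x \<in> S2"
        then have hx: "h2 x = (if x = n then h1 n else h1 0)" using S2le h2x by blast
        show "msg P t (h2 k) (h2 x) [] i = (if x = n then msg P t (h1 j) (h1 n) [] i else msg P t (h1 j) (h1 0) [] i)"
        proof (cases "x = n")
          case True then have "h2 x = h1 n" using hx by simp
          then show ?thesis using True hjk by simp
        next
          case False then have "h2 x = h1 0" using hx by simp
          then show ?thesis using False hjk by simp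
        qed
      qed
    qed
    ultimately show ?thesis using rt cd by simp
  qed
  show ?case
    using hjk sums unfolding h1_def h2_def S1_def S2_def by simp
qed

lemma out_eq:
  assumes "goodH H n" "goodH H' n" "wf_mpnn P"
  shows "mpnn_out P (mkG H n) n = mpnn_out P (mkG H' n) n"
proof -
  have sv: "sub_verts (ext P) (mkG H n) n = sub_verts (ext P) (mkG H' n) n"
    using sub_verts_mkG[OF assms(1,3)] sub_verts_mkG[OF assms(2,3)] by simp
  have le: "x \<in> sub_verts (ext P) (mkG H' n) n \<Longrightarrow> x \<le> n" for x
    using sub_verts_mkG[OF assms(2,3)] by (auto split: extraction.splits)
  have "x \<in># mset_set (sub_verts (ext P) (mkG H' n) n) \<Longrightarrow>
     hstate P (mkG H n) n (layers P) x = hstate P (mkG H' n) n (layers P) x" for x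
  proof -
    assume "x \<in># mset_set (sub_verts (ext P) (mkG H' n) n)"
    then have "x \<le> n" using le by (metis elem_mset_set empty_iff mset_set.infinite set_mset_empty)
    then show ?thesis using inv[OF assms, of x x] by blast
  qed
  then show ?thesis unfolding mpnn_out_def sv
    by (intro arg_cong[where f="readout P"] image_mset_cong)
qed

definition adjH1 :: "nat \<Rightarrow> nat \<Rightarrow> nat \<Rightarrow> bool" where
  "adjH1 n x y \<longleftrightarrow> x < n \<and> y < n \<and> (y = Suc x \<or> x = Suc y \<or> (x = 0 \<and> y = n - 1) \<or> (y = 0 \<and> x = n - 1))"

definition adjH2 :: "nat \<Rightarrow> nat \<Rightarrow> nat \<Rightarrow> bool" where
  "adjH2 n x y \<longleftrightarrow> x < n \<and> y < n \<and> x \<noteq> y \<and> x div 3 = y div 3"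

lemma good1: assumes "n \<ge> 3" shows "goodH (adjH1 n) n"
proof -
  have A: "\<forall>x y. adjH1 n x y \<longrightarrow> adjH1 n y x \<and> x \<noteq> y \<and> x < n \<and> y < n"
    using assms unfolding adjH1_def by auto
  have B: "card {k. adjH1 n j k} = 2" if j: "j < n" for j
  proof (cases "j = 0")
    case True
    then have "{k. adjH1 n j k} = {1, n - 1}" using assms by (auto simp: adjH1_def)
    then show ?thesis using assms by simp
  next
    case f: False
    show ?thesis
    proof (cases "j = n - 1")
      case True
      then have "{k. adjH1 n j k} = {0, j - 1}" using assms f by (auto simp: adjH1_def)
      then show ?thesis using f True assms by simp
    next
      case False
      then have "{k. adjH1 n j k} = {Suc j, j - 1}" using assms f j by (auto simp: adjH1_def)
      then show ?thesis by simp
    qed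
  qed
  show ?thesis unfolding goodH_def using A B assms by simp
qed

lemma good2: assumes "n = 3 * m" "m > 0" shows "goodH (adjH2 n) n"
proof -
  have A: "\<forall>x y. adjH2 n x y \<longrightarrow> adjH2 n y x \<and> x \<noteq> y \<and> x < n \<and> y < n"
    unfolding adjH2_def by auto
  have B: "card {k. adjH2 n j k} = 2" if j: "j < n" for j
  proof -
    define d where "d = j div 3"
    have "3 * d + 2 < n" using j assms unfolding d_def by presburger
    then have "{k. adjH2 n j k} = {3*d, 3*d+1, 3*d+2} - {j}"
      unfolding adjH2_def d_def using j by auto
    moreover have "j \<in> {3*d, 3*d+1, 3*d+2}" unfolding d_def by auto
    ultimately show "card {k. adjH2 n j k} = 2" by simp
  qed
  show ?thesis unfolding goodH_def using A B assms by simp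
qed

lemma four_block: "(a::nat) div 3 = b div 3 \<Longrightarrow> b div 3 = c div 3 \<Longrightarrow> c div 3 = e div 3 \<Longrightarrow>
  a \<noteq> b \<Longrightarrow> a \<noteq> c \<Longrightarrow> a \<noteq> e \<Longrightarrow> b \<noteq> c \<Longrightarrow> b \<noteq> e \<Longrightarrow> c \<noteq> e \<Longrightarrow> False"
proof -
  assume h: "(a::nat) div 3 = b div 3" "b div 3 = c div 3" "c div 3 = e div 3"
    "a \<noteq> b" "a \<noteq> c" "a \<noteq> e" "b \<noteq> c" "b \<noteq> e" "c \<noteq> e"
  have "a = 3 * (a div 3) + a mod 3" "b = 3 * (b div 3) + b mod 3"
    "c = 3 * (c div 3) + c mod 3" "e = 3 * (e div 3) + e mod 3" by simp_all
  moreover have "a mod 3 < 3" "b mod 3 < 3" "c mod 3 < 3" "e mod 3 < 3" by simp_all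
  ultimately show False using h by linarith
qed

lemma blk:
  assumes "n = 3 * m" "m > 0" "{a, b} \<in> edges (mkG (adjH2 n) n)" "a \<noteq> n" "b \<noteq> n"
  shows "a div 3 = b div 3"
  using assms(3-5) edge_iff[OF good2[OF assms(1,2)]] by (auto simp: adjG_def adjH2_def)

lemma path_G2_none:
  assumes n: "n = 3 * m" "m > 0" and L: "L \<ge> 4"
    and p: "is_path (mkG (adjH2 n) n) L vs" and h: "hd vs = n"
  shows False
proof -
  have len: "length vs = Suc L" and d: "distinct vs"
    and e: "\<And>k. k < L \<Longrightarrow> {vs ! k, vs ! Suc k} \<in> edges (mkG (adjH2 n) n)"
    using p by (auto simp: is_path_def)
  have v0: "vs ! 0 = n" using h len by (metis hd_conv_nth list.size(3) nat.distinct(1))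
  have ne: "vs ! i \<noteq> vs ! j" if "i \<le> L" "j \<le> L" "i \<noteq> j" for i j
    using d len that by (simp add: nth_eq_iff_index_eq)
  have nn: "vs ! i \<noteq> n" if "1 \<le> i" "i \<le> L" for i
    using ne[of i 0] that v0 by auto
  have b1: "vs ! Suc 0 div 3 = vs ! Suc (Suc 0) div 3"
    by (rule blk[OF n e]) (use L nn in auto)
  have b2: "vs ! Suc (Suc 0) div 3 = vs ! Suc (Suc (Suc 0)) div 3"
    by (rule blk[OF n e]) (use L nn in auto)
  have b3: "vs ! Suc (Suc (Suc 0)) div 3 = vs ! Suc (Suc (Suc (Suc 0))) div 3"
    by (rule blk[OF n e]) (use L nn in auto)
  show False
    by (rule four_block[OF b1 b2 b3]) (use ne L in auto)
qed

lemma path_G1: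
  assumes "L < n" "n \<ge> 3"
  shows "is_path (mkG (adjH1 n) n) L (n # [0..<L])"
proof -
  have g: "goodH (adjH1 n) n" using good1 assms by simp
  have "{(n # [0..<L]) ! k, (n # [0..<L]) ! Suc k} \<in> edges (mkG (adjH1 n) n)" if "k < L" for k
    using that assms by (auto simp: edge_iff[OF g] adjG_def adjH1_def nth_Cons')
  then show ?thesis using assms by (auto simp: is_path_def)
qed

lemma cycle_G1:
  assumes "L < n" "n \<ge> 3" "L \<ge> 3"
  shows "is_cycle (mkG (adjH1 n) n) L (n # [0..<L-1] @ [n])"
proof -
  have g: "goodH (adjH1 n) n" using good1 assms by simp
  have "{(n # [0..<L-1] @ [n]) ! k, (n # [0..<L-1] @ [n]) ! Suc k} \<in> edges (mkG (adjH1 n) n)" if "k < L" for k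
    using that assms by (auto simp: edge_iff[OF g] adjG_def adjH1_def nth_Cons' nth_append)
  moreover have "take L (n # [0..<L-1] @ [n]) = n # [0..<L-1]" using assms
    by (cases L) auto
  ultimately show ?thesis using assms by (auto simp: is_cycle_def nth_append)
qed

lemma mod_expl: "p < (L::nat) \<Longrightarrow> i < L \<Longrightarrow> (p + i) mod L = (if p + i < L then p + i else p + i - L)"
  by (auto simp: le_mod_geq)

lemma cycle_G2_none:
  assumes n: "n = 3 * m" "m > 0" and L: "L \<ge> 5"
    and c: "is_cycle (mkG (adjH2 n) n) L vs" and h: "n \<in> set vs"
  shows False
proof -
  have len: "length vs = Suc L" and d: "distinct (take L vs)" and wrap: "vs ! L = vs ! 0"
    and e: "\<And>k. k < L \<Longrightarrow> {vs ! k, vs ! Suc k} \<in> edges (mkG (adjH2 n) n)"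
    using c by (auto simp: is_cycle_def)
  have ne: "vs ! i \<noteq> vs ! j" if "i < L" "j < L" "i \<noteq> j" for i j
  proof
    assume "vs ! i = vs ! j"
    then show False using nth_eq_iff_index_eq[OF d, of i j] that len by simp
  qed
  obtain p where p: "p < L" "vs ! p = n"
  proof -
    obtain q where q: "q < Suc L" "vs ! q = n" using h len by (metis in_set_conv_nth)
    show ?thesis
    proof (cases "q < L")
      case True then show ?thesis using q that by blast
    next
      case False then have "q = L" using q by simp
      then show ?thesis using q wrap that[of 0] L by auto
    qed
  qed
  define f where "f i = vs ! ((p + i) mod L)" for i
  have E: "{f i, f (Suc i)} \<in> edges (mkG (adjH2 n) n)" if "i < L" for i
  proof (cases "Suc ((p + i) mod L) < L")
    case True
    then have "(p + Suc i) mod L = Suc ((p + i) mod L)"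
      by (simp add: mod_Suc)
    moreover have "(p + i) mod L < L" using L by simp
    ultimately show ?thesis unfolding f_def using e[of "(p + i) mod L"] by simp
  next
    case False
    have lt: "(p + i) mod L < L" using L by simp
    then have eq: "Suc ((p + i) mod L) = L" using False by simp
    then have "(p + Suc i) mod L = 0" by (simp add: mod_Suc)
    moreover have "{vs ! ((p + i) mod L), vs ! L} \<in> edges (mkG (adjH2 n) n)"
      using e[OF lt] eq by simp
    ultimately show ?thesis unfolding f_def using wrap by simp
  qed
  have fne: "f i \<noteq> f j" if "i < L" "j < L" "i \<noteq> j" for i j
  proof -
    have m: "(p + i) mod L \<noteq> (p + j) mod L" using that p(1) by (auto simp: mod_expl split: if_splits)
    have "(p + i) mod L < L" "(p + j) mod L < L" using L by simp_all
    then show ?thesis unfolding f_def using ne m by blast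
  qed
  have nn: "f i \<noteq> n" if "1 \<le> i" "i < L" for i
  proof -
    have "f 0 = n" unfolding f_def using p by simp
    then show ?thesis using fne[of i 0] that L by auto
  qed
  have b1: "f (Suc 0) div 3 = f (Suc (Suc 0)) div 3"
    by (rule blk[OF n E]) (use L nn in auto)
  have b2: "f (Suc (Suc 0)) div 3 = f (Suc (Suc (Suc 0))) div 3"
    by (rule blk[OF n E]) (use L nn in auto)
  have b3: "f (Suc (Suc (Suc 0))) div 3 = f (Suc (Suc (Suc (Suc 0)))) div 3"
    by (rule blk[OF n E]) (use L nn in auto)
  show False
    by (rule four_block[OF b1 b2 b3]) (use fne L in auto)
qed

lemma seq_sub: "\<forall>k<L. {vs ! k, vs ! Suc k} \<in> edges G \<Longrightarrow> seq_edges L vs \<subseteq> edges G"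
  unfolding seq_edges_def by auto

lemma indist:
  assumes n: "n = 3 * m" "m > 0" and ne: "C n (mkG (adjH1 n) n) \<noteq> C n (mkG (adjH2 n) n)"
  shows "\<not> can_count_node subgraph_mpnns C"
proof
  assume "can_count_node subgraph_mpnns C"
  then have cc: "\<forall>i1 G1 i2 G2. wf_graph G1 \<and> i1 \<in> verts G1 \<and> wf_graph G2 \<and> i2 \<in> verts G2 \<and>
        C i1 G1 \<noteq> C i2 G2 \<longrightarrow> (\<exists>f\<in>subgraph_mpnns. f (i1, G1) \<noteq> f (i2, G2))"
    unfolding can_count_node_def .
  have g1: "goodH (adjH1 n) n" using good1 n by simp
  have g2: "goodH (adjH2 n) n" using good2 n by simp
  have pre: "wf_graph (mkG (adjH1 n) n) \<and> n \<in> verts (mkG (adjH1 n) n) \<and> wf_graph (mkG (adjH2 n) n)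
     \<and> n \<in> verts (mkG (adjH2 n) n) \<and> C n (mkG (adjH1 n) n) \<noteq> C n (mkG (adjH2 n) n)"
    using wf_mkG[OF g1] wf_mkG[OF g2] ne by simp
  have "\<exists>f\<in>subgraph_mpnns. f (n, mkG (adjH1 n) n) \<noteq> f (n, mkG (adjH2 n) n)"
    using cc pre by blast
  then obtain f where "f \<in> subgraph_mpnns" "f (n, mkG (adjH1 n) n) \<noteq> f (n, mkG (adjH2 n) n)"
    by blast
  then obtain P where "wf_mpnn P" "mpnn_out P (mkG (adjH1 n) n) n \<noteq> mpnn_out P (mkG (adjH2 n) n) n"
    unfolding subgraph_mpnns_def by auto
  then show False using out_eq[OF g1 g2] by simp
qed

theorem theorem2:
  shows "(\<forall>L::nat. L \<ge> 5 \<longrightarrow> \<not> can_count_node subgraph_mpnns (cycle_count L)) \<and>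
         (\<forall>L::nat. L \<ge> 4 \<longrightarrow> \<not> can_count_node subgraph_mpnns (path_count L))"
proof (intro conjI allI impI)
  fix L :: nat assume L: "L \<ge> 5"
  define n where "n = 3 * L"
  have g1: "goodH (adjH1 n) n" using good1 n_def L by simp
  let ?A = "{seq_edges L vs | vs. is_cycle (mkG (adjH1 n) n) L vs \<and> n \<in> set vs}"
  let ?B = "{seq_edges L vs | vs. is_cycle (mkG (adjH2 n) n) L vs \<and> n \<in> set vs}"
  have B0: "?B = {}" using cycle_G2_none[OF n_def _ L] L by auto
  have fA: "finite ?A"
    by (rule finite_subset[of _ "Pow (edges (mkG (adjH1 n) n))"])
       (use seq_sub edges_finite[OF g1] in \<open>auto simp: is_cycle_def\<close>)
  have nA: "?A \<noteq> {}" using cycle_G1[of L n] L n_def by auto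
  have "card ?A > 0" using fA nA by (simp add: card_gt_0_iff)
  then have ne: "cycle_count L n (mkG (adjH1 n) n) \<noteq> cycle_count L n (mkG (adjH2 n) n)"
    unfolding cycle_count_def B0 by simp
  show "\<not> can_count_node subgraph_mpnns (cycle_count L)"
    by (rule indist[where C="cycle_count L", OF n_def _ ne]) (use L in simp)
next
  fix L :: nat assume L: "L \<ge> 4"
  define n where "n = 3 * L"
  have g1: "goodH (adjH1 n) n" using good1 n_def L by simp
  let ?A = "{seq_edges L vs | vs. is_path (mkG (adjH1 n) n) L vs \<and> hd vs = n}"
  let ?B = "{seq_edges L vs | vs. is_path (mkG (adjH2 n) n) L vs \<and> hd vs = n}"
  have B0: "?B = {}" using path_G2_none[OF n_def _ L] L by auto
  have fA: "finite ?A"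
    by (rule finite_subset[of _ "Pow (edges (mkG (adjH1 n) n))"])
       (use seq_sub edges_finite[OF g1] in \<open>auto simp: is_path_def\<close>)
  have nA: "?A \<noteq> {}" using path_G1[of L n] L n_def by fastforce
  have "card ?A > 0" using fA nA by (simp add: card_gt_0_iff)
  then have ne: "path_count L n (mkG (adjH1 n) n) \<noteq> path_count L n (mkG (adjH2 n) n)"
    unfolding path_count_def B0 by simp
  show "\<not> can_count_node subgraph_mpnns (path_count L)"
    by (rule indist[where C="path_count L", OF n_def _ ne]) (use L in simp)
qed

end
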